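(* Consider the system $x(t+1)=x(t)-L(t)x(t)$ and let $A_{\max}>0$ and $\alpha>0$ be constants such that almost surely $\sum_{i\in I}\sum_{j\ne i}a_{ij}(t)\le A_{\max}$ and $a_{ii}(t)\ge\alpha$ for all $i\in I$. If $\mathbf{1}^*\mathbb{E}(L(t))=0$, then $$\mathbb{E}[L(t)^*\mathbf{1}\mathbf{1}^*L(t)]\le\gamma\,\mathbb{E}[L(t)+L(t)^*-L(t)^*L(t)]\quad\text{with }\gamma=\frac{A_{\max}}{\alpha},$$ and consequently $\mathbb{E}[(\bar x(t)-\bar x(0))^2]\le\frac{\gamma}{N+\gamma}V(x(0))$ for all $t\ge0$.
   Context: Let $I$ be a finite set of $N$ nodes. For each $t\in\mathbb{Z}_{\ge0}$ let $A(t)=(a_{ij}(t))_{i,j\in I}$ be a random matrix with $a_{ij}(t)\ge 0$ and $\sum_{\ell\in I}a_{i\ell}(t)=1$ for all $i$ (so $a_{ii}(t)=1-\sum_{j\ne i}a_{ij}(t)$); the matrices $A(t)$ are i.i.d. in $t$. $L(t)$ is the Laplacian: $L_{ij}(t)=-a_{ij}(t)$ for $i\ne j$, $L_{ii}(t)=\sum_{j\ne i}a_{ij}(t)$. $x(0)\in\mathbb{R}^I$ is deterministic. $\mathbf{1}$ is the all-ones vector, $M^*$ the transpose; for $y\in\mathbb{R}^I$, $\bar y=\frac1N\sum_i y_i$, $V(y)=\frac1N\sum_i(y_i-\bar y)^2$. For square matrices, $A\le B$ means $A-B$ is negative semidefinite. *)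

theory Defs
  imports "HOL-Analysis.Analysis" "HOL-Probability.Probability"
begin

text \<open>Nodes are the elements of a finite type 'n, so N = CARD('n).
  Matrices are real^'n^'n, vectors real^'n.\<close>

definition lap :: "real^'n^'n \<Rightarrow> real^'n^'n" where
  "lap A = (\<chi> i j. if i = j then (\<Sum>k\<in>UNIV-{i}. A$i$k) else - A$i$j)"

definition ones_mat :: "real^'n^'n" where
  "ones_mat = (\<chi> i j. 1)"

definition mat_le :: "real^'n^'n \<Rightarrow> real^'n^'n \<Rightarrow> bool" where
  "mat_le A B \<longleftrightarrow> (\<forall>v. v \<bullet> ((A - B) *v v) \<le> 0)"

primrec traj :: "(nat \<Rightarrow> 'a \<Rightarrow> real^'n^'n) \<Rightarrow> real^'n \<Rightarrow> nat \<Rightarrow> 'a \<Rightarrow> real^'n" where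
  "traj A x0 0 \<omega> = x0"
| "traj A x0 (Suc t) \<omega> = traj A x0 t \<omega> - lap (A t \<omega>) *v traj A x0 t \<omega>"

definition vmean :: "real^'n \<Rightarrow> real" where
  "vmean y = (\<Sum>i\<in>UNIV. y$i) / real CARD('n)"

definition vvar :: "real^'n \<Rightarrow> real" where
  "vvar y = (\<Sum>i\<in>UNIV. (y$i - vmean y)^2) / real CARD('n)"

end

theory Submission imports Defs begin

lemma bm_vec_iff:
  fixes f :: "'a \<Rightarrow> 'b::euclidean_space^'n"
  shows "f \<in> borel_measurable M \<longleftrightarrow> (\<forall>i. (\<lambda>x. f x $ i) \<in> borel_measurable M)"
proof
  assume "f \<in> borel_measurable M"
  then show "\<forall>i. (\<lambda>x. f x $ i) \<in> borel_measurable M"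
    by (auto intro!: borel_measurable_continuous_on[where f="\<lambda>v. v $ i" for i] continuous_intros)
next
  assume h: "\<forall>i. (\<lambda>x. f x $ i) \<in> borel_measurable M"
  show "f \<in> borel_measurable M"
    unfolding borel_measurable_euclidean_space[where f=f]
    using h by (auto simp: Basis_vec_def inner_axis intro!: borel_measurable_inner)
qed

lemma sum_split_i:
  fixes f :: "'n::finite \<Rightarrow> real"
  shows "(\<Sum>j\<in>UNIV. f j) = f i + (\<Sum>j\<in>UNIV-{i}. f j)"
  by (simp add: sum.remove)

lemma lap_mulv:
  "(lap a *v v) $ i = (\<Sum>j\<in>UNIV-{i}. a$i$j * (v$i - v$j))"
proof -
  have "(lap a *v v) $ i = (\<Sum>j\<in>UNIV. lap a $i$j * v$j)"
    by (simp add: matrix_vector_mult_def)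
  also have "\<dots> = lap a $i$i * v$i + (\<Sum>j\<in>UNIV-{i}. lap a $i$j * v$j)"
    by (rule sum_split_i)
  also have "(\<Sum>j\<in>UNIV-{i}. lap a $i$j * v$j) = (\<Sum>j\<in>UNIV-{i}. - a$i$j * v$j)"
    by (rule sum.cong) (auto simp: lap_def)
  also have "lap a $i$i = (\<Sum>k\<in>UNIV-{i}. a$i$k)" by (simp add: lap_def)
  finally have "(lap a *v v) $ i = (\<Sum>k\<in>UNIV-{i}. a$i$k) * v$i + (\<Sum>j\<in>UNIV-{i}. - a$i$j * v$j)" .
  also have "\<dots> = (\<Sum>j\<in>UNIV-{i}. a$i$j * (v$i - v$j))"
    by (simp add: sum_distrib_right right_diff_distrib sum_subtractf sum_negf)
  finally show ?thesis .
qed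

lemma lap_one: "lap a *v vec c = 0"
  by (simp add: vec_eq_iff lap_mulv)

lemma colsum: "(\<Sum>i\<in>UNIV. (X *v v)$i) = (\<Sum>k\<in>UNIV. (\<Sum>i\<in>UNIV. X$i$k) * v$k)"
  by (simp add: matrix_vector_mult_def sum_distrib_right) (rule sum.swap)

lemma row_ineq:
  fixes p u :: "'n::finite \<Rightarrow> real"
  assumes p0: "\<And>j. p j \<ge> 0" and p1: "(\<Sum>j\<in>UNIV. p j) = 1" and pi: "p i \<ge> \<alpha>" and a0: "\<alpha> \<ge> 0"
  shows "\<alpha> * (\<Sum>j\<in>UNIV-{i}. p j * (u i - u j)^2) \<le> (\<Sum>j\<in>UNIV. p j * (u j)^2) - (\<Sum>j\<in>UNIV. p j * u j)^2"
proof -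
  define f where "f j k = p j * p k * (u j - u k)^2" for j k
  have f0: "f j k \<ge> 0" for j k using p0 by (simp add: f_def)
  have fs: "f j k = f k j" for j k by (simp add: f_def power2_commute)
  define S2 where "S2 = (\<Sum>j\<in>UNIV. p j * (u j)^2)"
  define S1 where "S1 = (\<Sum>j\<in>UNIV. p j * u j)"
  have "(\<Sum>j\<in>UNIV. \<Sum>k\<in>UNIV. f j k) = (\<Sum>j\<in>UNIV. \<Sum>k\<in>UNIV. p j * (u j)^2 * p k + p k * (u k)^2 * p j - 2 * (p j * u j) * (p k * u k))"
    by (intro sum.cong refl) (simp add: f_def power2_diff algebra_simps)
  also have "\<dots> = (\<Sum>j\<in>UNIV. \<Sum>k\<in>UNIV. p j * (u j)^2 * p k) + (\<Sum>j\<in>UNIV. \<Sum>k\<in>UNIV. p k * (u k)^2 * p j)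
      - 2 * (\<Sum>j\<in>UNIV. \<Sum>k\<in>UNIV. (p j * u j) * (p k * u k))"
    by (simp add: sum.distrib sum_subtractf sum_distrib_left mult.assoc)
  also have "(\<Sum>j\<in>UNIV. \<Sum>k\<in>UNIV. p j * (u j)^2 * p k) = S2"
    by (simp add: sum_distrib_left[symmetric] p1 S2_def)
  also have "(\<Sum>j\<in>UNIV. \<Sum>k\<in>UNIV. p k * (u k)^2 * p j) = S2"
    by (simp add: sum_distrib_right[symmetric] sum_distrib_left[symmetric] p1 S2_def)
  also have "(\<Sum>j\<in>UNIV. \<Sum>k\<in>UNIV. (p j * u j) * (p k * u k)) = S1 * S1"
    by (simp add: sum_distrib_left[symmetric] sum_distrib_right[symmetric] S1_def)
  finally have D: "(\<Sum>j\<in>UNIV. \<Sum>k\<in>UNIV. f j k) = 2 * (S2 - S1^2)"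
    using p1 by (simp add: power2_eq_square algebra_simps)
  have E1: "(\<Sum>j\<in>UNIV. \<Sum>k\<in>UNIV. f j k) = (\<Sum>k\<in>UNIV. f i k) + (\<Sum>j\<in>UNIV-{i}. \<Sum>k\<in>UNIV. f j k)"
    by (rule sum_split_i)
  have E2: "(\<Sum>j\<in>UNIV-{i}. \<Sum>k\<in>UNIV. f j k) \<ge> (\<Sum>j\<in>UNIV-{i}. f j i)"
    by (intro sum_mono member_le_sum) (auto simp: f0)
  have E3: "(\<Sum>j\<in>UNIV-{i}. f j i) = (\<Sum>j\<in>UNIV-{i}. f i j)"
    by (rule sum.cong[OF refl]) (rule fs)
  have E: "(\<Sum>j\<in>UNIV. \<Sum>k\<in>UNIV. f j k) \<ge> (\<Sum>k\<in>UNIV. f i k) + (\<Sum>j\<in>UNIV-{i}. f i j)"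
    using E1 E2 E3 by linarith
  have "(\<Sum>k\<in>UNIV. f i k) = f i i + (\<Sum>k\<in>UNIV-{i}. f i k)" by (rule sum_split_i)
  then have F: "(\<Sum>k\<in>UNIV. f i k) = p i * (\<Sum>j\<in>UNIV-{i}. p j * (u i - u j)^2)"
    by (simp add: f_def sum_distrib_left mult.assoc)
  have F': "(\<Sum>k\<in>UNIV-{i}. f i k) = p i * (\<Sum>j\<in>UNIV-{i}. p j * (u i - u j)^2)"
    by (simp add: f_def sum_distrib_left mult.assoc)
  have G: "(\<Sum>j\<in>UNIV-{i}. p j * (u i - u j)^2) \<ge> 0" by (intro sum_nonneg) (simp add: p0)
  have "\<alpha> * (\<Sum>j\<in>UNIV-{i}. p j * (u i - u j)^2) \<le> p i * (\<Sum>j\<in>UNIV-{i}. p j * (u i - u j)^2)"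
    by (intro mult_right_mono pi G)
  then show ?thesis using D E F F' unfolding S1_def[symmetric] S2_def[symmetric] by (smt (verit))
qed

definition good :: "real \<Rightarrow> real \<Rightarrow> real^'n^'n \<Rightarrow> bool" where
  "good Amax \<alpha> a \<longleftrightarrow> (\<forall>i j. a$i$j \<ge> 0) \<and> (\<forall>i. (\<Sum>j\<in>UNIV. a$i$j) = 1)
     \<and> (\<Sum>i\<in>UNIV. \<Sum>j\<in>UNIV-{i}. a$i$j) \<le> Amax \<and> (\<forall>i. a$i$i \<ge> \<alpha>)"

lemma w_eq:
  assumes "(\<Sum>j\<in>UNIV. a$i$j) = 1"
  shows "(v - lap a *v v) $ i = (\<Sum>j\<in>UNIV. a$i$j * v$j)"
proof -
  have r: "(\<Sum>j\<in>UNIV-{i}. a$i$j) = 1 - a$i$i" using assms sum_split_i[of "\<lambda>j. a$i$j" i] by simp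
  have "(\<Sum>j\<in>UNIV. a$i$j * v$j) = a$i$i * v$i + (\<Sum>j\<in>UNIV-{i}. a$i$j * v$j)" by (rule sum_split_i)
  moreover have "(v - lap a *v v) $ i = v$i - (\<Sum>j\<in>UNIV-{i}. a$i$j) * v$i + (\<Sum>j\<in>UNIV-{i}. a$i$j * v$j)"
    by (simp add: lap_mulv right_diff_distrib sum_subtractf sum_distrib_right)
  ultimately show ?thesis using r by (simp add: algebra_simps)
qed

lemma d_eq:
  assumes "\<And>i. (\<Sum>j\<in>UNIV. a$i$j) = 1"
  shows "(\<Sum>i\<in>UNIV. lap a $i$j) = 1 - (\<Sum>i\<in>UNIV. a$i$j)"
proof -
  have r: "(\<Sum>k\<in>UNIV-{j}. a$j$k) = 1 - a$j$j" using assms[of j] sum_split_i[of "\<lambda>k. a$j$k" j] by simp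
  have "(\<Sum>i\<in>UNIV. lap a $i$j) = lap a $j$j + (\<Sum>i\<in>UNIV-{j}. lap a $i$j)" by (rule sum_split_i)
  also have "(\<Sum>i\<in>UNIV-{j}. lap a $i$j) = (\<Sum>i\<in>UNIV-{j}. - a $i$j)"
    by (rule sum.cong) (auto simp: lap_def)
  also have "lap a $j$j = (\<Sum>k\<in>UNIV-{j}. a$j$k)" by (simp add: lap_def)
  finally have "(\<Sum>i\<in>UNIV. lap a $i$j) = 1 - a$j$j - (\<Sum>i\<in>UNIV-{j}. a $i$j)"
    using r by (simp add: sum_negf)
  moreover have "(\<Sum>i\<in>UNIV. a$i$j) = a$j$j + (\<Sum>i\<in>UNIV-{j}. a $i$j)" by (rule sum_split_i)
  ultimately show ?thesis by simp
qed

lemma key: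
  fixes a :: "real^'n^'n"
  assumes g: "good Amax \<alpha> a" and al: "\<alpha> > 0"
  shows "(\<Sum>i\<in>UNIV. (lap a *v v)$i)^2 \<le> (Amax/\<alpha>) * (v \<bullet> v - (\<Sum>k\<in>UNIV. (\<Sum>i\<in>UNIV. lap a$i$k) * (v$k)^2)
      - (v - lap a *v v) \<bullet> (v - lap a *v v))"
proof -
  from g have a0: "\<And>i j. a$i$j \<ge> 0" and rs: "\<And>i. (\<Sum>j\<in>UNIV. a$i$j) = 1"
    and am: "(\<Sum>i\<in>UNIV. \<Sum>j\<in>UNIV-{i}. a$i$j) \<le> Amax" and ad: "\<And>i. a$i$i \<ge> \<alpha>"
    unfolding good_def by auto
  define T where "T = (\<Sum>i\<in>UNIV. \<Sum>j\<in>UNIV-{i}. a$i$j * (v$i - v$j)^2)"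
  define R where "R = v \<bullet> v - (\<Sum>k\<in>UNIV. (\<Sum>i\<in>UNIV. lap a$i$k) * (v$k)^2)
      - (v - lap a *v v) \<bullet> (v - lap a *v v)"
  define S where "S = Sigma (UNIV::'n set) (\<lambda>i. UNIV-{i})"
  have sig: "(\<Sum>i\<in>UNIV. \<Sum>j\<in>UNIV-{i}. g i j) = (\<Sum>(i,j)\<in>S. g i j)" for g :: "'n \<Rightarrow> 'n \<Rightarrow> real"
    unfolding S_def by (rule sum.Sigma) auto
  have T0: "T \<ge> 0" unfolding T_def by (intro sum_nonneg mult_nonneg_nonneg) (auto simp: a0)
  have "(\<Sum>i\<in>UNIV. (lap a *v v)$i)^2 = (\<Sum>(i,j)\<in>S. sqrt (a$i$j) * (sqrt (a$i$j) * (v$i - v$j)))^2"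
    by (simp add: lap_mulv sig mult.assoc[symmetric] a0)
  also have "\<dots> \<le> (\<Sum>(i,j)\<in>S. (sqrt (a$i$j))^2) * (\<Sum>(i,j)\<in>S. (sqrt (a$i$j) * (v$i - v$j))^2)"
    using Cauchy_Schwarz_ineq_sum[of "\<lambda>(i,j). sqrt (a$i$j)" "\<lambda>(i,j). sqrt (a$i$j) * (v$i - v$j)" S]
    by (simp add: case_prod_unfold)
  also have "\<dots> = (\<Sum>i\<in>UNIV. \<Sum>j\<in>UNIV-{i}. a$i$j) * T"
    by (simp add: sig T_def power_mult_distrib a0)
  also have "\<dots> \<le> Amax * T" by (intro mult_right_mono am T0)
  finally have C1: "(\<Sum>i\<in>UNIV. (lap a *v v)$i)^2 \<le> Amax * T" .
  have row: "\<alpha> * (\<Sum>j\<in>UNIV-{i}. a$i$j * (v$i - v$j)^2) \<le> (\<Sum>j\<in>UNIV. a$i$j * (v$j)^2) - ((v - lap a *v v) $ i)^2" for i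
    unfolding w_eq[OF rs] by (rule row_ineq) (use a0 rs ad al in auto)
  have "\<alpha> * T \<le> (\<Sum>i\<in>UNIV. (\<Sum>j\<in>UNIV. a$i$j * (v$j)^2) - ((v - lap a *v v) $ i)^2)"
    using sum_mono[of UNIV, OF row] by (simp add: T_def sum_distrib_left)
  also have "\<dots> = R"
  proof -
    have "(\<Sum>i\<in>UNIV. \<Sum>j\<in>UNIV. a$i$j * (v$j)^2) = (\<Sum>j\<in>UNIV. (\<Sum>i\<in>UNIV. a$i$j) * (v$j)^2)"
      by (simp add: sum_distrib_right) (rule sum.swap)
    also have "\<dots> = (\<Sum>j\<in>UNIV. (v$j)^2 - (\<Sum>i\<in>UNIV. lap a$i$j) * (v$j)^2)"
      by (simp add: d_eq[OF rs] algebra_simps)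
    finally show ?thesis unfolding R_def
      by (simp add: sum_subtractf inner_vec_def power2_eq_square)
  qed
  finally have C2: "\<alpha> * T \<le> R" .
  have "Amax * T = (Amax / \<alpha>) * (\<alpha> * T)" using al by simp
  also have "\<dots> \<le> (Amax / \<alpha>) * R"
  proof -
    have "0 \<le> (\<Sum>i\<in>UNIV. \<Sum>j\<in>UNIV-{i}. a$i$j)" by (intro sum_nonneg) (simp add: a0)
    then have "Amax \<ge> 0" using am by linarith
    then show ?thesis using C2 al by (intro mult_left_mono) auto
  qed
  finally show ?thesis using C1 unfolding R_def by linarith
qed

lemma B_form:
  fixes L :: "real^'n^'n"
  shows "v \<bullet> ((transpose L ** ones_mat ** L) *v v) = (\<Sum>i\<in>UNIV. (L *v v)$i)^2"
proof -
  have o: "ones_mat *v w = vec (\<Sum>i\<in>UNIV. w$i)" for w :: "real^'n"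
    by (simp add: vec_eq_iff ones_mat_def matrix_vector_mult_def)
  have "(transpose L ** ones_mat ** L) *v v = transpose L *v (ones_mat *v (L *v v))"
    by (simp only: matrix_vector_mul_assoc[symmetric])
  then have "v \<bullet> ((transpose L ** ones_mat ** L) *v v) = ((ones_mat *v (L *v v)) v* L) \<bullet> v"
    by (simp add: inner_commute)
  also have "\<dots> = (ones_mat *v (L *v v)) \<bullet> (L *v v)"
    by (rule dot_lmul_matrix)
  also have "\<dots> = (\<Sum>i\<in>UNIV. (L *v v)$i)^2"
    by (simp add: o inner_vec_def power2_eq_square sum_distrib_left)
  finally show ?thesis .
qed

lemma C_form:
  fixes L :: "real^'n^'n"
  shows "v \<bullet> ((L + transpose L - transpose L ** L) *v v) = v \<bullet> v - (v - L *v v) \<bullet> (v - L *v v)"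
proof -
  have e: "(transpose L ** L) *v v = transpose L *v (L *v v)" by (simp only: matrix_vector_mul_assoc[symmetric])
  have "v \<bullet> ((L + transpose L - transpose L ** L) *v v) = v \<bullet> (L *v v) + v \<bullet> (transpose L *v v) - v \<bullet> (transpose L *v (L *v v))"
    by (simp only: e matrix_vector_mult_add_rdistrib matrix_vector_mult_diff_rdistrib inner_add_right
        inner_diff_right)
  also have "v \<bullet> (transpose L *v v) = v \<bullet> (L *v v)"
    by (simp only: transpose_matrix_vector inner_commute[of v "v v* L"] dot_lmul_matrix)
  also have "v \<bullet> (transpose L *v (L *v v)) = (L *v v) \<bullet> (L *v v)"
    by (simp only: transpose_matrix_vector inner_commute[of v "(L *v v) v* L"] dot_lmul_matrix)
  finally have "v \<bullet> ((L + transpose L - transpose L ** L) *v v) = v \<bullet> (L *v v) + v \<bullet> (L *v v) - (L *v v) \<bullet> (L *v v)" .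
  then show ?thesis by (simp add: inner_diff_left inner_diff_right inner_commute)
qed

lemma bm_mat_iff:
  fixes f :: "'a \<Rightarrow> real^'n^'m"
  shows "f \<in> borel_measurable M \<longleftrightarrow> (\<forall>i j. (\<lambda>x. f x $ i $ j) \<in> borel_measurable M)"
  by (simp add: bm_vec_iff[of f] bm_vec_iff[of "\<lambda>x. f x $ i" for i])

lemma bm_lap: "(f :: 'a \<Rightarrow> real^'n^'n) \<in> borel_measurable M \<Longrightarrow> (\<lambda>x. lap (f x)) \<in> borel_measurable M"
  unfolding bm_mat_iff
proof (intro allI impI)
  fix i j assume h: "\<forall>i j. (\<lambda>x. f x $ i $ j) \<in> borel_measurable M"
  show "(\<lambda>x. lap (f x) $ i $ j) \<in> borel_measurable M"
  proof (cases "i = j")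
    case True then show ?thesis using h by (auto simp: lap_def intro!: borel_measurable_sum)
  next
    case False then show ?thesis using h by (simp add: lap_def)
  qed
qed

lemma bm_mmul: "(f :: 'a \<Rightarrow> real^'n^'m) \<in> borel_measurable M \<Longrightarrow> (g :: 'a \<Rightarrow> real^'k^'n) \<in> borel_measurable M
   \<Longrightarrow> (\<lambda>x. f x ** g x) \<in> borel_measurable M"
  unfolding bm_mat_iff by (auto simp: matrix_matrix_mult_def intro!: borel_measurable_sum borel_measurable_times)

lemma bm_transpose: "(f :: 'a \<Rightarrow> real^'n^'m) \<in> borel_measurable M \<Longrightarrow> (\<lambda>x. transpose (f x)) \<in> borel_measurable M"
  unfolding bm_mat_iff by (auto simp: transpose_def)

lemma bm_mv: "(f :: 'a \<Rightarrow> real^'n^'m) \<in> borel_measurable M \<Longrightarrow> (g :: 'a \<Rightarrow> real^'n) \<in> borel_measurable M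
   \<Longrightarrow> (\<lambda>x. f x *v g x) \<in> borel_measurable M"
  unfolding bm_mat_iff bm_vec_iff[of "\<lambda>x. f x *v g x"] bm_vec_iff[of g] by (auto simp: matrix_vector_mult_def intro!: borel_measurable_sum borel_measurable_times)

lemma norm_mat_bound:
  fixes X :: "real^'n^'m"
  assumes "\<And>i j. \<bar>X$i$j\<bar> \<le> c"
  shows "norm X \<le> real CARD('m) * real CARD('n) * c"
proof -
  have "norm X \<le> (\<Sum>i\<in>UNIV. norm (X$i))" by (simp add: norm_vec_def L2_set_le_sum)
  also have "\<dots> \<le> (\<Sum>i\<in>(UNIV::'m set). real CARD('n) * c)"
  proof (rule sum_mono)
    fix i
    have "norm (X$i) \<le> (\<Sum>j\<in>UNIV. \<bar>X$i$j\<bar>)" by (rule norm_le_l1_cart)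
    also have "\<dots> \<le> (\<Sum>j\<in>(UNIV::'n set). c)" by (intro sum_mono assms)
    finally show "norm (X$i) \<le> real CARD('n) * c" by simp
  qed
  finally show ?thesis by simp
qed

lemma mmul_bound:
  fixes X :: "real^'n^'m" and Y :: "real^'k^'n"
  assumes "\<And>i j. \<bar>X$i$j\<bar> \<le> c1" "\<And>i j. \<bar>Y$i$j\<bar> \<le> c2"
  shows "\<bar>(X ** Y)$i$j\<bar> \<le> real CARD('n) * (c1 * c2)"
proof -
  have "\<bar>(X ** Y)$i$j\<bar> \<le> (\<Sum>k\<in>UNIV. \<bar>X$i$k * Y$k$j\<bar>)"
    by (simp add: matrix_matrix_mult_def sum_abs)
  also have "\<dots> \<le> (\<Sum>k\<in>(UNIV::'n set). c1 * c2)"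
    by (intro sum_mono) (simp add: abs_mult mult_mono assms order_trans[OF abs_ge_zero assms(1)])
  finally show ?thesis by simp
qed

lemma good_bound:
  assumes "good Amax \<alpha> a"
  shows "\<bar>a$i$j\<bar> \<le> 1" "\<bar>lap a$i$j\<bar> \<le> 1"
proof -
  from assms have a0: "\<And>i j. a$i$j \<ge> 0" and rs: "\<And>i. (\<Sum>j\<in>UNIV. a$i$j) = 1"
    unfolding good_def by auto
  have le: "a$i$j \<le> 1" for i j
    using member_le_sum[of j UNIV "\<lambda>j. a$i$j"] a0 rs[of i] by auto
  show "\<bar>a$i$j\<bar> \<le> 1" using le a0 by auto
  have "(\<Sum>k\<in>UNIV-{i}. a$i$k) \<le> (\<Sum>k\<in>UNIV. a$i$k)"
    by (rule sum_mono2) (auto simp: a0)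
  moreover have "(\<Sum>k\<in>UNIV-{i}. a$i$k) \<ge> 0" by (intro sum_nonneg) (simp add: a0)
  ultimately show "\<bar>lap a$i$j\<bar> \<le> 1" using rs[of i] le[of i j] a0[of i j]
    by (auto simp: lap_def)
qed

lemma good_B_bound:
  assumes "good Amax \<alpha> (a::real^'n^'n)"
  shows "norm (transpose (lap a) ** ones_mat ** lap a) \<le> real CARD('n) * real CARD('n) * (real CARD('n) * (real CARD('n) * (1 * 1) * 1))"
proof (rule norm_mat_bound)
  fix i j
  have t: "\<bar>transpose (lap a) $i$j\<bar> \<le> 1" for i j using good_bound[OF assms] by (simp add: transpose_def)
  have o: "\<bar>(ones_mat::real^'n^'n) $i$j\<bar> \<le> 1" for i j by (simp add: ones_mat_def)
  have "\<bar>(transpose (lap a) ** ones_mat) $i$j\<bar> \<le> real CARD('n) * (1 * 1)" for i j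
    by (rule mmul_bound[OF t o])
  then show "\<bar>(transpose (lap a) ** ones_mat ** lap a) $i$j\<bar> \<le> real CARD('n) * (real CARD('n) * (1 * 1) * 1)"
    by (rule mmul_bound) (rule good_bound[OF assms])
qed

lemma good_C_bound:
  assumes "good Amax \<alpha> (a::real^'n^'n)"
  shows "norm (lap a + transpose (lap a) - transpose (lap a) ** lap a) \<le> real CARD('n) * real CARD('n) * (1 + 1 + real CARD('n) * (1 * 1))"
proof (rule norm_mat_bound)
  fix i j
  have t: "\<bar>transpose (lap a) $i$j\<bar> \<le> 1" for i j using good_bound[OF assms] by (simp add: transpose_def)
  have m: "\<bar>(transpose (lap a) ** lap a) $i$j\<bar> \<le> real CARD('n) * (1 * 1)"
    by (rule mmul_bound[OF t]) (rule good_bound[OF assms])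
  have "\<bar>(lap a + transpose (lap a) - transpose (lap a) ** lap a) $i$j\<bar>
      \<le> \<bar>lap a $i$j\<bar> + \<bar>transpose (lap a) $i$j\<bar> + \<bar>(transpose (lap a) ** lap a) $i$j\<bar>"
    by simp
  then show "\<bar>(lap a + transpose (lap a) - transpose (lap a) ** lap a) $i$j\<bar> \<le> 1 + 1 + real CARD('n) * (1 * 1)"
    using good_bound(2)[OF assms, of i j] t[of i j] m by linarith
qed

lemma good_lap_bound:
  assumes "good Amax \<alpha> (a::real^'n^'n)"
  shows "norm (lap a) \<le> real CARD('n) * real CARD('n) * 1"
  by (rule norm_mat_bound) (rule good_bound[OF assms])

lemma scaleR_mv: "((r::real) *\<^sub>R (b::real^'n^'m)) *v v = r *\<^sub>R (b *v v)"
  by (simp add: vec_eq_iff matrix_vector_mult_def sum_distrib_left mult.assoc)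

lemma linear_quad: "linear (\<lambda>X::real^'n^'n. v \<bullet> (X *v v))"
  by (rule linearI) (simp_all add: matrix_vector_mult_add_rdistrib inner_add_right scaleR_mv)

lemma traj_cong: "(\<And>i. i < t \<Longrightarrow> A i \<omega> = B i \<omega>') \<Longrightarrow> traj A x t \<omega> = traj B x t \<omega>'"
  by (induction t) auto

lemma traj_shift: "traj A (x - vec c) t \<omega> = traj A x t \<omega> - vec c"
  by (induction t) (simp_all add: matrix_vector_mult_diff_distrib lap_one)

lemma vmean_add: "vmean (y + vec c :: real^'n) = vmean y + c"
  by (simp add: vmean_def sum.distrib add_divide_distrib)

lemma stoch_bound:
  assumes g: "good Amax \<alpha> a" and b: "\<And>j. \<bar>v$j\<bar> \<le> B"
  shows "\<bar>(v - lap a *v v)$i\<bar> \<le> B"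
proof -
  from g have a0: "\<And>i j. a$i$j \<ge> 0" and rs: "\<And>i. (\<Sum>j\<in>UNIV. a$i$j) = 1"
    unfolding good_def by auto
  have "\<bar>(v - lap a *v v)$i\<bar> = \<bar>\<Sum>j\<in>UNIV. a$i$j * v$j\<bar>" by (simp only: w_eq[OF rs])
  also have "\<dots> \<le> (\<Sum>j\<in>UNIV. a$i$j * B)"
    by (rule order_trans[OF sum_abs]) (intro sum_mono, simp add: abs_mult a0 mult_left_mono b)
  also have "\<dots> = B" by (simp add: sum_distrib_right[symmetric] rs)
  finally show ?thesis .
qed

lemma bm_step:
  "(g :: 'b \<Rightarrow> real^'n) \<in> borel_measurable N \<Longrightarrow> (h :: 'b \<Rightarrow> real^'n^'n) \<in> borel_measurable N
   \<Longrightarrow> (\<lambda>x. g x - lap (h x) *v g x) \<in> borel_measurable N"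
  by (intro borel_measurable_diff bm_mv bm_lap)

lemma bm_Z:
  fixes z0 :: "real^'n"
  shows "t \<le> n \<Longrightarrow> (\<lambda>f. traj (\<lambda>i (_::unit). f i) z0 t ()) \<in> borel_measurable (Pi\<^sub>M {..<n} (\<lambda>_. (borel :: (real^'n^'n) measure)))"
proof (induction t)
  case 0 then show ?case by simp
next
  case (Suc t)
  have "(\<lambda>f. f t) \<in> Pi\<^sub>M {..<n} (\<lambda>_. (borel :: (real^'n^'n) measure)) \<rightarrow>\<^sub>M borel"
    using Suc.prems by (intro measurable_component_singleton) auto
  then show ?case using Suc by (simp add: bm_step)
qed

lemma step_det:
  fixes a :: "real^'n^'n"
  assumes g: "good Amax \<alpha> a" and al: "\<alpha> > 0"
  shows "(\<Sum>i\<in>UNIV. (v - lap a *v v)$i)^2 + (Amax/\<alpha>) * ((v - lap a *v v) \<bullet> (v - lap a *v v))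
     \<le> (\<Sum>i\<in>UNIV. v$i)^2 + (Amax/\<alpha>) * (v \<bullet> v)
        - 2 * (\<Sum>k\<in>UNIV. ((\<Sum>i\<in>UNIV. v$i) * v$k) * (\<Sum>i\<in>UNIV. lap a$i$k))
        - (Amax/\<alpha>) * (\<Sum>k\<in>UNIV. (v$k)^2 * (\<Sum>i\<in>UNIV. lap a$i$k))"
proof -
  define S where "S = (\<Sum>i\<in>UNIV. v$i)"
  define r where "r = (\<Sum>i\<in>UNIV. (lap a *v v)$i)"
  define W where "W = (v - lap a *v v) \<bullet> (v - lap a *v v)"
  define Y where "Y = (\<Sum>k\<in>UNIV. (\<Sum>i\<in>UNIV. lap a$i$k) * (v$k)^2)"
  have S': "(\<Sum>i\<in>UNIV. (v - lap a *v v)$i) = S - r" unfolding S_def r_def by (simp add: sum_subtractf)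
  have rk: "r = (\<Sum>k\<in>UNIV. (\<Sum>i\<in>UNIV. lap a$i$k) * v$k)" unfolding r_def by (rule colsum)
  have sr: "S * r = (\<Sum>k\<in>UNIV. (S * v$k) * (\<Sum>i\<in>UNIV. lap a$i$k))"
    unfolding rk sum_distrib_left[of S] by (rule sum.cong) (simp_all add: algebra_simps)
  have Y': "(\<Sum>k\<in>UNIV. (v$k)^2 * (\<Sum>i\<in>UNIV. lap a$i$k)) = Y"
    unfolding Y_def by (rule sum.cong) (simp_all add: algebra_simps)
  have r2: "r^2 \<le> (Amax/\<alpha>) * (v \<bullet> v - Y - W)" unfolding r_def Y_def W_def by (rule key[OF g al])
  have e: "(S - r)^2 = S^2 - 2 * (S * r) + r^2" by (simp add: power2_diff)
  show ?thesis unfolding S'[unfolded S_def] S_def[symmetric] W_def[symmetric] sr[symmetric] Y'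
    using r2 e by (simp add: right_diff_distrib)
qed

lemma vec_bounds:
  fixes v :: "real^'n"
  assumes b: "\<And>k. \<bar>v$k\<bar> \<le> B"
  shows "\<bar>\<Sum>i\<in>UNIV. v$i\<bar> \<le> real CARD('n) * B"
    "\<bar>(\<Sum>i\<in>UNIV. v$i) * v$k\<bar> \<le> real CARD('n) * B * B"
    "\<bar>(v$k)^2\<bar> \<le> B^2"
    "\<bar>(\<Sum>i\<in>UNIV. v$i)^2\<bar> \<le> (real CARD('n) * B)^2"
    "\<bar>v \<bullet> v\<bar> \<le> real CARD('n) * B^2"
proof -
  have B0: "B \<ge> 0" using b[of undefined] by simp
  show s: "\<bar>\<Sum>i\<in>UNIV. v$i\<bar> \<le> real CARD('n) * B"
    using order_trans[OF sum_abs sum_mono[of UNIV "\<lambda>i. \<bar>v$i\<bar>" "\<lambda>_. B"]] b by simp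
  show "\<bar>(\<Sum>i\<in>UNIV. v$i) * v$k\<bar> \<le> real CARD('n) * B * B"
    unfolding abs_mult by (intro mult_mono s b) (simp_all add: B0)
  have sq: "\<bar>(v$k)^2\<bar> \<le> B^2" for k
    using power_mono[OF b[of k], of 2] by simp
  then show "\<bar>(v$k)^2\<bar> \<le> B^2" .
  show "\<bar>(\<Sum>i\<in>UNIV. v$i)^2\<bar> \<le> (real CARD('n) * B)^2"
    using power_mono[OF s, of 2] by simp
  have "\<bar>v \<bullet> v\<bar> = (\<Sum>i\<in>UNIV. (v$i)^2)"
    by (simp add: inner_vec_def power2_eq_square abs_of_nonneg sum_nonneg)
  also have "\<dots> \<le> (\<Sum>i\<in>(UNIV::'n set). B^2)" by (intro sum_mono) (use sq in auto)
  finally show "\<bar>v \<bullet> v\<bar> \<le> real CARD('n) * B^2" by simp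
qed

context prob_space
begin

lemma part1:
  fixes A :: "'a \<Rightarrow> real^'n^'n"
  assumes meas: "A \<in> borel_measurable M"
    and gd: "AE \<omega> in M. good Amax \<alpha> (A \<omega>)"
    and d0: "\<And>k. (\<integral>\<omega>. (\<Sum>i\<in>UNIV. lap (A \<omega>)$i$k) \<partial>M) = 0"
    and al: "\<alpha> > 0"
  shows "mat_le (\<integral>\<omega>. transpose (lap (A \<omega>)) ** ones_mat ** lap (A \<omega>) \<partial>M)
            ((Amax / \<alpha>) *\<^sub>R (\<integral>\<omega>. lap (A \<omega>) + transpose (lap (A \<omega>))
                 - transpose (lap (A \<omega>)) ** lap (A \<omega>) \<partial>M))"
  unfolding mat_le_def
proof
  fix v :: "real^'n"
  define B where "B \<omega> = transpose (lap (A \<omega>)) ** ones_mat ** lap (A \<omega>)" for \<omega>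
  define C where "C \<omega> = lap (A \<omega>) + transpose (lap (A \<omega>)) - transpose (lap (A \<omega>)) ** lap (A \<omega>)" for \<omega>
  define \<Phi> where "\<Phi> X = v \<bullet> (X *v v)" for X :: "real^'n^'n"
  have bl: "bounded_linear \<Phi>" unfolding \<Phi>_def using linear_quad linear_conv_bounded_linear by blast
  have mL: "(\<lambda>\<omega>. lap (A \<omega>)) \<in> borel_measurable M" by (rule bm_lap[OF meas])
  have mB: "B \<in> borel_measurable M" unfolding B_def
    by (intro bm_mmul bm_transpose mL) simp
  have mC: "C \<in> borel_measurable M" unfolding C_def
    by (intro borel_measurable_add borel_measurable_diff bm_mmul bm_transpose mL)
  have "AE x in M. norm (B x) \<le> real CARD('n) * real CARD('n) * (real CARD('n) * (real CARD('n) * (1 * 1) * 1))"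
    using gd
    apply (rule eventually_mono)
    unfolding B_def
    apply (erule good_B_bound)
    done
  have iB: "integrable M B"
    by (rule integrable_const_bound[OF _ mB]) fact
  have "AE x in M. norm (C x) \<le> real CARD('n) * real CARD('n) * (1 + 1 + real CARD('n) * (1 * 1))"
    using gd
    apply (rule eventually_mono)
    unfolding C_def
    apply (erule good_C_bound)
    done
  have iC: "integrable M C"
    by (rule integrable_const_bound[OF _ mC]) fact
  have "AE x in M. norm (lap (A x)) \<le> real CARD('n) * real CARD('n) * 1"
    using gd
    apply (rule eventually_mono)
    apply (erule good_lap_bound)
    done
  have iL: "integrable M (\<lambda>\<omega>. lap (A \<omega>))"
    by (rule integrable_const_bound[OF _ mL]) fact
  have iLe: "integrable M (\<lambda>\<omega>. lap (A \<omega>) $i$k)" for i k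
    using integrable_bounded_linear[OF bounded_linear_vec_nth integrable_bounded_linear[OF bounded_linear_vec_nth iL]] .
  define F where "F \<omega> = v \<bullet> v - (v - lap (A \<omega>) *v v) \<bullet> (v - lap (A \<omega>) *v v)" for \<omega>
  define G where "G \<omega> = (\<Sum>k\<in>UNIV. (\<Sum>i\<in>UNIV. lap (A \<omega>)$i$k) * (v$k)^2)" for \<omega>
  define H where "H \<omega> = (\<Sum>i\<in>UNIV. (lap (A \<omega>) *v v)$i)^2" for \<omega>
  have PB: "\<Phi> (B \<omega>) = H \<omega>" for \<omega> unfolding \<Phi>_def B_def H_def by (rule B_form)
  have PC: "\<Phi> (C \<omega>) = F \<omega>" for \<omega> unfolding \<Phi>_def C_def F_def by (rule C_form)
  have iH: "integrable M H" using integrable_bounded_linear[OF bl iB] by (simp add: PB)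
  have iF: "integrable M F" using integrable_bounded_linear[OF bl iC] by (simp add: PC)
  have iG: "integrable M G" unfolding G_def by (intro Bochner_Integration.integrable_sum) (simp add: iLe)
  have EG: "integral\<^sup>L M G = 0"
    unfolding G_def using iLe by (simp add: Bochner_Integration.integral_sum Bochner_Integration.integrable_sum d0)
  have "integral\<^sup>L M H \<le> integral\<^sup>L M (\<lambda>\<omega>. (Amax / \<alpha>) * (F \<omega> - G \<omega>))"
  proof (rule integral_mono_AE[OF iH])
    show "integrable M (\<lambda>\<omega>. (Amax / \<alpha>) * (F \<omega> - G \<omega>))" using iF iG by simp
    show "AE \<omega> in M. H \<omega> \<le> (Amax / \<alpha>) * (F \<omega> - G \<omega>)"
      using gd
    proof (rule eventually_mono)
      fix \<omega> assume g: "good Amax \<alpha> (A \<omega>)"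
      show "H \<omega> \<le> (Amax / \<alpha>) * (F \<omega> - G \<omega>)"
      proof -
        have e: "F \<omega> - G \<omega> = v \<bullet> v - G \<omega> - (v - lap (A \<omega>) *v v) \<bullet> (v - lap (A \<omega>) *v v)"
          by (simp add: F_def)
        have "H \<omega> \<le> (Amax / \<alpha>) * (v \<bullet> v - G \<omega> - (v - lap (A \<omega>) *v v) \<bullet> (v - lap (A \<omega>) *v v))"
          unfolding H_def G_def by (rule key[OF g al])
        then show ?thesis by (simp only: e)
      qed
    qed
  qed
  also have "\<dots> = (Amax / \<alpha>) * integral\<^sup>L M F"
    using iF iG EG by simp
  finally have main: "integral\<^sup>L M H \<le> (Amax / \<alpha>) * integral\<^sup>L M F" .
  have "\<Phi> (integral\<^sup>L M B - (Amax / \<alpha>) *\<^sub>R integral\<^sup>L M C) = \<Phi> (integral\<^sup>L M B) - (Amax / \<alpha>) * \<Phi> (integral\<^sup>L M C)"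
    by (simp add: \<Phi>_def matrix_vector_mult_diff_rdistrib scaleR_mv inner_diff_right)
  also have "\<Phi> (integral\<^sup>L M B) = integral\<^sup>L M H"
    using integral_bounded_linear[OF bl iB] by (simp add: PB)
  also have "\<Phi> (integral\<^sup>L M C) = integral\<^sup>L M F"
    using integral_bounded_linear[OF bl iC] by (simp add: PC)
  finally show "v \<bullet> ((integral\<^sup>L M B - (Amax / \<alpha>) *\<^sub>R integral\<^sup>L M C) *v v) \<le> 0"
    using main unfolding \<Phi>_def by simp
qed


lemma iL_lem:
  fixes A :: "'a \<Rightarrow> real^'n^'n"
  assumes meas: "A \<in> borel_measurable M" and gd: "AE \<omega> in M. good Amax \<alpha> (A \<omega>)"
  shows "integrable M (\<lambda>\<omega>. lap (A \<omega>))"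
proof -
  have "AE x in M. norm (lap (A x)) \<le> real CARD('n) * real CARD('n) * 1"
    using gd
    apply (rule eventually_mono)
    apply (erule good_lap_bound)
    done
  then show ?thesis by (rule integrable_const_bound[OF _ bm_lap[OF meas]])
qed

lemma d0_from:
  fixes A :: "'a \<Rightarrow> real^'n^'n"
  assumes iL: "integrable M (\<lambda>\<omega>. lap (A \<omega>))"
    and h: "vec 1 v* (integral\<^sup>L M (\<lambda>\<omega>. lap (A \<omega>))) = 0"
  shows "(\<integral>\<omega>. (\<Sum>i\<in>UNIV. lap (A \<omega>)$i$k) \<partial>M) = 0"
proof -
  define T where "T X = (\<Sum>i\<in>UNIV. X$i$k)" for X :: "real^'n^'n"
  have "linear T" unfolding T_def by (rule linearI) (simp_all add: sum.distrib sum_distrib_left)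
  then have bl: "bounded_linear T" using linear_conv_bounded_linear by blast
  have "T (integral\<^sup>L M (\<lambda>\<omega>. lap (A \<omega>))) = (vec 1 v* (integral\<^sup>L M (\<lambda>\<omega>. lap (A \<omega>)))) $ k"
    by (simp add: T_def vector_matrix_mult_def)
  also have "\<dots> = 0" using h by simp
  finally show ?thesis using integral_bounded_linear[OF bl iL] unfolding T_def by simp
qed

lemma indep_prod:
  fixes A :: "nat \<Rightarrow> 'a \<Rightarrow> real^'n^'n"
  assumes ind: "indep_vars (\<lambda>_. borel) A UNIV"
    and \<psi>: "\<psi> \<in> borel_measurable (Pi\<^sub>M {..<t} (\<lambda>_. borel))"
    and \<phi>: "\<phi> \<in> borel_measurable borel"
    and i1: "integrable M (\<lambda>\<omega>. \<psi> (restrict (\<lambda>i. A i \<omega>) {..<t}))"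
    and i2: "integrable M (\<lambda>\<omega>. \<phi> (A t \<omega>) :: real)"
  shows "(\<integral>\<omega>. \<psi> (restrict (\<lambda>i. A i \<omega>) {..<t}) * \<phi> (A t \<omega>) \<partial>M)
      = (\<integral>\<omega>. \<psi> (restrict (\<lambda>i. A i \<omega>) {..<t}) \<partial>M) * (\<integral>\<omega>. \<phi> (A t \<omega>) \<partial>M)"
proof -
  have "indep_var borel (\<psi> \<circ> (\<lambda>\<omega>. restrict (\<lambda>i. A i \<omega>) {..<t}))
      borel ((\<lambda>f. \<phi> (f t)) \<circ> (\<lambda>\<omega>. restrict (\<lambda>i. A i \<omega>) {t}))"
    by (intro indep_var_compose[OF indep_var_restrict[OF ind]] \<psi> measurable_compose[OF _ \<phi>]
        measurable_component_singleton) auto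
  also have "((\<lambda>f. \<phi> (f t)) \<circ> (\<lambda>\<omega>. restrict (\<lambda>i. A i \<omega>) {t})) = (\<lambda>\<omega>. \<phi> (A t \<omega>))"
    by auto
  finally have "indep_var borel (\<lambda>\<omega>. \<psi> (restrict (\<lambda>i. A i \<omega>) {..<t})) borel (\<lambda>\<omega>. \<phi> (A t \<omega>))"
    by (simp add: comp_def restrict_def lessThan_def)
  then show ?thesis by (rule indep_var_lebesgue_integral[OF _ i1 i2])
qed


lemma part2:
  fixes A :: "nat \<Rightarrow> 'a \<Rightarrow> real^'n^'n" and x0 :: "real^'n"
  assumes meas: "\<And>t. A t \<in> borel_measurable M"
    and ind: "indep_vars (\<lambda>_. borel) A UNIV"
    and gd: "\<And>t. AE \<omega> in M. good Amax \<alpha> (A t \<omega>)"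
    and d0: "\<And>t k. (\<integral>\<omega>. (\<Sum>i\<in>UNIV. lap (A t \<omega>)$i$k) \<partial>M) = 0"
    and al: "\<alpha> > 0" and Am: "Amax > 0"
  shows "(\<integral>\<omega>. (vmean (traj A x0 t \<omega>) - vmean x0)^2 \<partial>M)
     \<le> (Amax / \<alpha>) / (real CARD('n) + Amax / \<alpha>) * vvar x0"
proof -
  define \<gamma> where "\<gamma> = Amax / \<alpha>"
  define N where "N = real CARD('n)"
  define c where "c = vmean x0"
  define z0 where "z0 = x0 - vec c"
  define z where "z t \<omega> = traj A z0 t \<omega>" for t \<omega>
  define Z where "Z t f = traj (\<lambda>i (_::unit). f i) z0 t ()" for t and f :: "nat \<Rightarrow> real^'n^'n"
  define s where "s t \<omega> = (\<Sum>i\<in>UNIV. z t \<omega> $ i)" for t \<omega>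
  define q where "q t \<omega> = z t \<omega> \<bullet> z t \<omega>" for t \<omega>
  define d where "d t k \<omega> = (\<Sum>i\<in>UNIV. lap (A t \<omega>)$i$k)" for t k \<omega>
  define B0 where "B0 = (\<Sum>i\<in>UNIV. \<bar>z0$i\<bar>)"
  have g0: "\<gamma> > 0" using al Am by (simp add: \<gamma>_def)
  have N0: "N > 0" by (simp add: N_def)
  have zZ: "z t \<omega> = Z t (restrict (\<lambda>i. A i \<omega>) {..<t})" for t \<omega>
    unfolding z_def Z_def by (rule traj_cong) auto
  have mZ: "Z t \<in> borel_measurable (Pi\<^sub>M {..<t} (\<lambda>_. borel))" for t
    unfolding Z_def by (rule bm_Z) simp
  have mZk: "(\<lambda>f. Z t f $ k) \<in> borel_measurable (Pi\<^sub>M {..<t} (\<lambda>_. borel))" for t k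
    using mZ[of t] bm_vec_iff by blast
  have mz: "z t \<in> borel_measurable M" for t
    unfolding z_def by (induction t) (simp_all add: bm_step meas)
  have mzk: "(\<lambda>\<omega>. z t \<omega> $ k) \<in> borel_measurable M" for t k
    using mz[of t] bm_vec_iff by blast
  have bz: "AE \<omega> in M. \<forall>k. \<bar>z t \<omega> $ k\<bar> \<le> B0" for t
  proof (induction t)
    case 0
    have "\<bar>z0 $ k\<bar> \<le> B0" for k unfolding B0_def by (rule member_le_sum) auto
    then show ?case by (simp add: z_def)
  next
    case (Suc t)
    from Suc gd[of t] show ?case
      by eventually_elim (unfold z_def traj.simps, intro allI stoch_bound, auto)
  qed
  have iLt: "integrable M (\<lambda>\<omega>. lap (A t \<omega>))" for t by (rule iL_lem[OF meas gd])
  have id: "integrable M (d t k)" for t k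
    unfolding d_def using integrable_bounded_linear[OF bounded_linear_vec_nth integrable_bounded_linear[OF bounded_linear_vec_nth iLt]]
    by (intro Bochner_Integration.integrable_sum) auto
  have ibd: "integrable M f" if "f \<in> borel_measurable M" "AE \<omega> in M. \<bar>f \<omega>\<bar> \<le> K" for f :: "'a \<Rightarrow> real" and K
    using that by (intro integrable_const_bound[where B=K]) auto
  have ms: "s t \<in> borel_measurable M" for t
    unfolding s_def by (intro borel_measurable_sum mzk)
  have i1: "integrable M (\<lambda>\<omega>. s t \<omega> * z t \<omega> $ k)" for t k
  proof -
    have b: "AE \<omega> in M. \<bar>s t \<omega> * z t \<omega> $ k\<bar> \<le> N * B0 * B0"
      using bz[of t] by (rule eventually_mono) (unfold s_def N_def, rule vec_bounds, blast)
    show ?thesis by (rule ibd[OF _ b]) (intro borel_measurable_times borel_measurable_power ms mzk)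
  qed
  have i2: "integrable M (\<lambda>\<omega>. (z t \<omega> $ k)^2)" for t k
  proof -
    have b: "AE \<omega> in M. \<bar>(z t \<omega> $ k)^2\<bar> \<le> B0^2"
      using bz[of t] by (rule eventually_mono) (rule vec_bounds, blast)
    show ?thesis by (rule ibd[OF _ b]) (intro borel_measurable_power mzk)
  qed
  have i3: "integrable M (\<lambda>\<omega>. (s t \<omega>)^2)" for t
  proof -
    have b: "AE \<omega> in M. \<bar>(s t \<omega>)^2\<bar> \<le> (N * B0)^2"
      using bz[of t] by (rule eventually_mono) (unfold s_def N_def, rule vec_bounds, blast)
    show ?thesis by (rule ibd[OF _ b]) (intro borel_measurable_times borel_measurable_power ms mzk)
  qed
  have i4: "integrable M (q t)" for t
  proof -
    have b: "AE \<omega> in M. \<bar>q t \<omega>\<bar> \<le> N * B0^2"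
      using bz[of t] by (rule eventually_mono) (unfold q_def N_def, rule vec_bounds, blast)
    show ?thesis by (rule ibd[OF _ b]) (unfold q_def, intro borel_measurable_inner mz)
  qed
  have mphi: "(\<lambda>a::real^'n^'n. \<Sum>i\<in>UNIV. lap a $i$k) \<in> borel_measurable borel" for k
  proof -
    have "(\<lambda>a::real^'n^'n. lap a) \<in> borel_measurable borel" by (rule bm_lap) simp
    then show ?thesis using bm_mat_iff by (intro borel_measurable_sum) blast
  qed
  have E1: "(\<integral>\<omega>. (s t \<omega> * z t \<omega> $ k) * d t k \<omega> \<partial>M) = 0" for t k
  proof -
    define \<psi> where "\<psi> f = (\<Sum>i\<in>UNIV. Z t f $ i) * Z t f $ k" for f
    have m\<psi>: "\<psi> \<in> borel_measurable (Pi\<^sub>M {..<t} (\<lambda>_. borel))"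
      unfolding \<psi>_def using mZk by (intro borel_measurable_times borel_measurable_sum) auto
    have e: "s t \<omega> * z t \<omega> $ k = \<psi> (restrict (\<lambda>i. A i \<omega>) {..<t})" for \<omega>
      by (simp add: s_def \<psi>_def zZ)
    have "(\<integral>\<omega>. \<psi> (restrict (\<lambda>i. A i \<omega>) {..<t}) * d t k \<omega> \<partial>M)
       = (\<integral>\<omega>. \<psi> (restrict (\<lambda>i. A i \<omega>) {..<t}) \<partial>M) * (\<integral>\<omega>. d t k \<omega> \<partial>M)"
      unfolding d_def by (rule indep_prod[OF ind m\<psi> mphi]) (use i1[of t k, unfolded e] id[of t k, unfolded d_def] in \<open>simp_all\<close>)
    then show ?thesis by (simp add: e d_def d0)
  qed
  have E2: "(\<integral>\<omega>. (z t \<omega> $ k)^2 * d t k \<omega> \<partial>M) = 0" for t k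
  proof -
    define \<psi> where "\<psi> f = (Z t f $ k)^2" for f
    have m\<psi>: "\<psi> \<in> borel_measurable (Pi\<^sub>M {..<t} (\<lambda>_. borel))"
      unfolding \<psi>_def using mZk by auto
    have e: "(z t \<omega> $ k)^2 = \<psi> (restrict (\<lambda>i. A i \<omega>) {..<t})" for \<omega>
      by (simp add: \<psi>_def zZ)
    have "(\<integral>\<omega>. \<psi> (restrict (\<lambda>i. A i \<omega>) {..<t}) * d t k \<omega> \<partial>M)
       = (\<integral>\<omega>. \<psi> (restrict (\<lambda>i. A i \<omega>) {..<t}) \<partial>M) * (\<integral>\<omega>. d t k \<omega> \<partial>M)"
      unfolding d_def by (rule indep_prod[OF ind m\<psi> mphi]) (use i2[of t k, unfolded e] id[of t k, unfolded d_def] in \<open>simp_all\<close>)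
    then show ?thesis by (simp add: e d_def d0)
  qed
  have dfun: "d t k = (\<lambda>\<omega>. \<Sum>i\<in>UNIV. lap (A t \<omega>)$i$k)" for t k by (rule ext) (simp add: d_def)
  have step: "(\<integral>\<omega>. (s (Suc t) \<omega>)^2 \<partial>M) + \<gamma> * (\<integral>\<omega>. q (Suc t) \<omega> \<partial>M)
      \<le> (\<integral>\<omega>. (s t \<omega>)^2 \<partial>M) + \<gamma> * (\<integral>\<omega>. q t \<omega> \<partial>M)" for t
  proof -
    define R where "R \<omega> = (s t \<omega>)^2 + \<gamma> * q t \<omega> - 2 * (\<Sum>k\<in>UNIV. (s t \<omega> * z t \<omega> $ k) * d t k \<omega>)
        - \<gamma> * (\<Sum>k\<in>UNIV. (z t \<omega> $ k)^2 * d t k \<omega>)" for \<omega>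
    have i5: "integrable M (\<lambda>\<omega>. (s t \<omega> * z t \<omega> $ k) * d t k \<omega>)" for k
    proof -
      define \<psi> where "\<psi> f = (\<Sum>i\<in>UNIV. Z t f $ i) * Z t f $ k" for f
      have m\<psi>: "\<psi> \<in> borel_measurable (Pi\<^sub>M {..<t} (\<lambda>_. borel))"
        unfolding \<psi>_def using mZk by (intro borel_measurable_times borel_measurable_sum) auto
      have e: "s t \<omega> * z t \<omega> $ k = \<psi> (restrict (\<lambda>i. A i \<omega>) {..<t})" for \<omega>
        by (simp add: s_def \<psi>_def zZ)
      have "indep_var borel (\<psi> \<circ> (\<lambda>\<omega>. restrict (\<lambda>i. A i \<omega>) {..<t}))
          borel ((\<lambda>f. (\<Sum>i\<in>UNIV. lap (f t) $i$k)) \<circ> (\<lambda>\<omega>. restrict (\<lambda>i. A i \<omega>) {t}))"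
        by (intro indep_var_compose[OF indep_var_restrict[OF ind]] m\<psi> measurable_compose[OF _ mphi]
            measurable_component_singleton) auto
      then have "indep_var borel (\<lambda>\<omega>. s t \<omega> * z t \<omega> $ k) borel (d t k)"
        by (simp add: comp_def e dfun restrict_def lessThan_def)
      then show ?thesis by (rule indep_var_integrable[OF _ i1 id])
    qed
    have i6: "integrable M (\<lambda>\<omega>. (z t \<omega> $ k)^2 * d t k \<omega>)" for k
    proof -
      define \<psi> where "\<psi> f = (Z t f $ k)^2" for f
      have m\<psi>: "\<psi> \<in> borel_measurable (Pi\<^sub>M {..<t} (\<lambda>_. borel))"
        unfolding \<psi>_def using mZk by auto
      have e: "(z t \<omega> $ k)^2 = \<psi> (restrict (\<lambda>i. A i \<omega>) {..<t})" for \<omega>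
        by (simp add: \<psi>_def zZ)
      have "indep_var borel (\<psi> \<circ> (\<lambda>\<omega>. restrict (\<lambda>i. A i \<omega>) {..<t}))
          borel ((\<lambda>f. (\<Sum>i\<in>UNIV. lap (f t) $i$k)) \<circ> (\<lambda>\<omega>. restrict (\<lambda>i. A i \<omega>) {t}))"
        by (intro indep_var_compose[OF indep_var_restrict[OF ind]] m\<psi> measurable_compose[OF _ mphi]
            measurable_component_singleton) auto
      then have "indep_var borel (\<lambda>\<omega>. (z t \<omega> $ k)^2) borel (d t k)"
        by (simp add: comp_def e dfun restrict_def lessThan_def)
      then show ?thesis by (rule indep_var_integrable[OF _ i2 id])
    qed
    have iR: "integrable M R" unfolding R_def using i3 i4 i5 i6
      by (intro Bochner_Integration.integrable_diff Bochner_Integration.integrable_add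
          integrable_mult_right Bochner_Integration.integrable_sum) auto
    have ER: "integral\<^sup>L M R = (\<integral>\<omega>. (s t \<omega>)^2 \<partial>M) + \<gamma> * (\<integral>\<omega>. q t \<omega> \<partial>M)"
      unfolding R_def using i3 i4 i5 i6 E1 E2
      by (simp add: Bochner_Integration.integral_sum Bochner_Integration.integrable_sum)
    have iL': "integrable M (\<lambda>\<omega>. (s (Suc t) \<omega>)^2 + \<gamma> * q (Suc t) \<omega>)" using i3 i4 by simp
    have "integral\<^sup>L M (\<lambda>\<omega>. (s (Suc t) \<omega>)^2 + \<gamma> * q (Suc t) \<omega>) \<le> integral\<^sup>L M R"
    proof (rule integral_mono_AE[OF iL' iR])
      show "AE \<omega> in M. (s (Suc t) \<omega>)^2 + \<gamma> * q (Suc t) \<omega> \<le> R \<omega>"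
        using gd[of t]
      proof (rule eventually_mono)
        fix \<omega> assume g: "good Amax \<alpha> (A t \<omega>)"
        show "(s (Suc t) \<omega>)^2 + \<gamma> * q (Suc t) \<omega> \<le> R \<omega>"
          using step_det[OF g al, of "z t \<omega>"]
          unfolding R_def s_def q_def d_def \<gamma>_def by (simp add: z_def)
      qed
    qed
    then show ?thesis using ER i3 i4 by simp
  qed
  have ind_bound: "(\<integral>\<omega>. (s t \<omega>)^2 \<partial>M) + \<gamma> * (\<integral>\<omega>. q t \<omega> \<partial>M) \<le> \<gamma> * (z0 \<bullet> z0)" for t
  proof (induction t)
    case 0
    have "s 0 \<omega> = 0" for \<omega>
      by (simp add: s_def z_def z0_def c_def vmean_def sum_subtractf N0[unfolded N_def])
    then show ?case by (simp add: q_def z_def prob_space)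
  next
    case (Suc t) then show ?case using step[of t] by linarith
  qed
  have cs: "(s t \<omega>)^2 \<le> N * q t \<omega>" for t \<omega>
  proof -
    have "(\<Sum>i\<in>UNIV. 1 * z t \<omega> $ i)^2 \<le> (\<Sum>i\<in>(UNIV::'n set). 1^2) * (\<Sum>i\<in>UNIV. (z t \<omega> $ i)^2)"
      by (rule Cauchy_Schwarz_ineq_sum)
    then show ?thesis by (simp add: s_def q_def N_def inner_vec_def power2_eq_square)
  qed
  have Es: "(\<integral>\<omega>. (s t \<omega>)^2 \<partial>M) \<le> N * (\<integral>\<omega>. q t \<omega> \<partial>M)"
  proof -
    have "(\<integral>\<omega>. (s t \<omega>)^2 \<partial>M) \<le> (\<integral>\<omega>. N * q t \<omega> \<partial>M)"
      by (rule integral_mono[OF i3]) (use i4 cs in auto)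
    then show ?thesis by simp
  qed
  have zz: "z0 \<bullet> z0 = N * vvar x0"
    using N0 by (simp add: z0_def c_def vvar_def N_def inner_vec_def power2_eq_square)
  have tr: "traj A x0 t \<omega> = z t \<omega> + vec c" for \<omega>
    using traj_shift[of A x0 c t \<omega>] by (simp add: z_def z0_def)
  have tv: "(vmean (traj A x0 t \<omega>) - vmean x0)^2 = (s t \<omega>)^2 / N^2" for \<omega>
    unfolding tr vmean_add c_def[symmetric] by (simp add: vmean_def s_def N_def power_divide)
  define e where "e = (\<integral>\<omega>. (s t \<omega>)^2 \<partial>M)"
  define Q where "Q = (\<integral>\<omega>. q t \<omega> \<partial>M)"
  have h1: "e + \<gamma> * Q \<le> \<gamma> * (N * vvar x0)" using ind_bound[of t] zz by (simp add: e_def Q_def)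
  have h2: "e \<le> N * Q" using Es by (simp add: e_def Q_def)
  have h3: "e * (N + \<gamma>) \<le> \<gamma> * N^2 * vvar x0"
  proof -
    have "\<gamma> * e \<le> \<gamma> * (N * Q)" using h2 g0 by (intro mult_left_mono) auto
    then have "e * N + \<gamma> * e \<le> N * (\<gamma> * (N * vvar x0))"
      using mult_left_mono[OF h1, of N] N0 by (simp add: algebra_simps)
    then show ?thesis by (simp add: algebra_simps power2_eq_square)
  qed
  have "(\<integral>\<omega>. (vmean (traj A x0 t \<omega>) - vmean x0)^2 \<partial>M) = e / N^2"
    by (simp add: tv e_def)
  also have "\<dots> \<le> \<gamma> / (N + \<gamma>) * vvar x0"
    using h3 N0 g0 by (simp add: divide_simps) (simp add: algebra_simps power2_eq_square)
  finally show ?thesis by (simp add: \<gamma>_def N_def)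
qed


end

theorem theorem3:
  fixes M :: "'a measure" and A :: "nat \<Rightarrow> 'a \<Rightarrow> real^'n^'n"
    and x0 :: "real^'n" and Amax \<alpha> :: real
  assumes "prob_space M"
    and "\<And>t. A t \<in> borel_measurable M"
    and "prob_space.indep_vars M (\<lambda>_. borel) A UNIV"
    and "\<And>t. distr M borel (A t) = distr M borel (A 0)"
    and "\<And>t. AE \<omega> in M. \<forall>i j. A t \<omega> $ i $ j \<ge> 0"
    and "\<And>t. AE \<omega> in M. \<forall>i. (\<Sum>j\<in>UNIV. A t \<omega> $ i $ j) = 1"
    and "Amax > 0" and "\<alpha> > 0"
    and "\<And>t. AE \<omega> in M. (\<Sum>i\<in>UNIV. \<Sum>j\<in>UNIV-{i}. A t \<omega> $ i $ j) \<le> Amax"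
    and "\<And>t. AE \<omega> in M. \<forall>i. A t \<omega> $ i $ i \<ge> \<alpha>"
    and "\<And>t. vec 1 v* (integral\<^sup>L M (\<lambda>\<omega>. lap (A t \<omega>))) = 0"
  shows "(\<forall>t. mat_le
            (integral\<^sup>L M (\<lambda>\<omega>. transpose (lap (A t \<omega>)) ** ones_mat ** lap (A t \<omega>)))
            ((Amax / \<alpha>) *\<^sub>R integral\<^sup>L M (\<lambda>\<omega>. lap (A t \<omega>) + transpose (lap (A t \<omega>))
                 - transpose (lap (A t \<omega>)) ** lap (A t \<omega>))))
       \<and> (\<forall>t. integral\<^sup>L M (\<lambda>\<omega>. (vmean (traj A x0 t \<omega>) - vmean x0)^2)
              \<le> (Amax / \<alpha>) / (real CARD('n) + Amax / \<alpha>) * vvar x0)"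
proof -
  interpret prob_space M by fact
  have gd: "AE \<omega> in M. good Amax \<alpha> (A t \<omega>)" for t
    using assms(5)[of t] assms(6)[of t] assms(9)[of t] assms(10)[of t]
    by eventually_elim (auto simp: good_def)
  have iL: "integrable M (\<lambda>\<omega>. lap (A t \<omega>))" for t by (rule iL_lem[OF assms(2) gd])
  have d0: "(\<integral>\<omega>. (\<Sum>i\<in>UNIV. lap (A t \<omega>)$i$k) \<partial>M) = 0" for t k
    by (rule d0_from[OF iL assms(11)])
  show ?thesis
    using part1[OF assms(2) gd d0 assms(8)] part2[OF assms(2) assms(3) gd d0 assms(8) assms(7)] by blast
qed

end
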